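(* Let $G=K(n_1,\dots,n_s)$ be a complete $s$-partite graph with parts $V_1,\dots,V_s$, $|V_j|=n_j$, $n_1\ge n_2\ge\cdots\ge n_s$, and $n_j\le 5$ for all $j$. Suppose $G$ has at least two parts with at least $3$ vertices. Then there is an optimal $3$-relaxed coloring of $G$ which assigns the same color to three vertices of $V_1$ and three vertices of $V_2$.
   Context: A map $f$ from $V(G)$ to a finite set of colors is a $3$-relaxed coloring if every vertex $u$ has at most $3$ neighbors $v$ with $f(v)=f(u)$; it is optimal if it uses the minimum possible number $\chi_3(G)$ of colors. *)

theory Defs
  imports Main
begin

text \<open>A graph is given by a vertex set V and a symmetric irreflexive adjacency relation E.\<close>

definition relaxed_coloring :: "nat \<Rightarrow> 'v set \<Rightarrow> ('v \<Rightarrow> 'v \<Rightarrow> bool) \<Rightarrow> ('v \<Rightarrow> 'c) \<Rightarrow> bool" where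
  "relaxed_coloring k V E f \<longleftrightarrow> (\<forall>u\<in>V. card {v\<in>V. E u v \<and> f v = f u} \<le> k)"

definition relaxed_chi :: "nat \<Rightarrow> 'v set \<Rightarrow> ('v \<Rightarrow> 'v \<Rightarrow> bool) \<Rightarrow> nat" where
  "relaxed_chi k V E = (LEAST m. \<exists>f :: 'v \<Rightarrow> nat. relaxed_coloring k V E f \<and> card (f ` V) = m)"

definition optimal_relaxed_coloring :: "nat \<Rightarrow> 'v set \<Rightarrow> ('v \<Rightarrow> 'v \<Rightarrow> bool) \<Rightarrow> ('v \<Rightarrow> nat) \<Rightarrow> bool" where
  "optimal_relaxed_coloring k V E f \<longleftrightarrow>
     relaxed_coloring k V E f \<and> card (f ` V) = relaxed_chi k V E"

text \<open>Complete multipartite graph K(n_0,...,n_{s-1}); vertex (j,i) is the i-th vertex of part j.\<close>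
definition cmp_vertices :: "nat \<Rightarrow> (nat \<Rightarrow> nat) \<Rightarrow> (nat \<times> nat) set" where
  "cmp_vertices s n = {(j, i). j < s \<and> i < n j}"

definition cmp_edge :: "nat \<times> nat \<Rightarrow> nat \<times> nat \<Rightarrow> bool" where
  "cmp_edge u v \<longleftrightarrow> fst u \<noteq> fst v"

definition cmp_part :: "(nat \<Rightarrow> nat) \<Rightarrow> nat \<Rightarrow> (nat \<times> nat) set" where
  "cmp_part n j = {(j, i) | i. i < n j}"

end

theory Submission
  imports Defs
begin

definition okS :: "(nat \<times> nat) set \<Rightarrow> bool" where
  "okS S \<longleftrightarrow> (\<forall>u\<in>S. card {v\<in>S. fst v \<noteq> fst u} \<le> 3)"

definition prt :: "(nat \<times> nat) set \<Rightarrow> nat \<Rightarrow> (nat \<times> nat) set" where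
  "prt V j = {v\<in>V. fst v = j}"

definition cls :: "(nat \<times> nat) set \<Rightarrow> (nat \<times> nat \<Rightarrow> nat) \<Rightarrow> nat \<Rightarrow> (nat \<times> nat) set" where
  "cls V f c = {v\<in>V. f v = c}"

definition col :: "(nat \<times> nat) set \<Rightarrow> (nat \<times> nat \<Rightarrow> nat) \<Rightarrow> bool" where
  "col V f \<longleftrightarrow> (\<forall>c. okS (cls V f c))"

definition goodc :: "(nat \<times> nat) set \<Rightarrow> nat \<Rightarrow> nat \<Rightarrow> (nat \<times> nat \<Rightarrow> nat) \<Rightarrow> nat \<Rightarrow> bool" where
  "goodc V p q g c \<longleftrightarrow> cls V g c \<subseteq> prt V p \<union> prt V q \<and> cls V g c \<noteq> {} \<and>
     card (cls V g c \<inter> prt V p) \<le> 3 \<and> card (cls V g c \<inter> prt V q) \<le> 3"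

definition DONE :: "(nat \<times> nat) set \<Rightarrow> nat \<Rightarrow> nat \<Rightarrow> (nat \<times> nat \<Rightarrow> nat) \<Rightarrow> bool" where
  "DONE V p q f \<longleftrightarrow> (\<exists>g c. col V g \<and> g ` V \<subseteq> f ` V \<and> goodc V p q g c)"

definition RED :: "(nat \<times> nat) set \<Rightarrow> nat \<Rightarrow> nat \<Rightarrow> (nat \<times> nat \<Rightarrow> nat) \<Rightarrow> bool" where
  "RED V p q f \<longleftrightarrow> (\<exists>g. col V g \<and> g ` V \<subseteq> f ` V \<and>
      card (g ` (prt V p \<union> prt V q)) < card (f ` (prt V p \<union> prt V q)))"

lemma goodc_sym: "goodc V p q g c = goodc V q p g c"
  unfolding goodc_def by auto

lemma DONE_sym: "DONE V p q f = DONE V q p f"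
  unfolding DONE_def using goodc_sym by metis

lemma RED_sym: "RED V p q f = RED V q p f"
  unfolding RED_def by (simp add: Un_commute)

lemma okS_subset: "finite S \<Longrightarrow> okS S \<Longrightarrow> T \<subseteq> S \<Longrightarrow> okS T"
  unfolding okS_def
proof (intro ballI)
  fix u assume fS: "finite S" and h: "\<forall>u\<in>S. card {v \<in> S. fst v \<noteq> fst u} \<le> 3"
    and T: "T \<subseteq> S" and u: "u \<in> T"
  have "card {v \<in> T. fst v \<noteq> fst u} \<le> card {v \<in> S. fst v \<noteq> fst u}"
    by (rule card_mono) (use fS T in auto)
  also have "\<dots> \<le> 3" using h u T by auto
  finally show "card {v \<in> T. fst v \<noteq> fst u} \<le> 3" .
qed

lemma okS_card4: "finite S \<Longrightarrow> card S \<le> 4 \<Longrightarrow> okS S"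
  unfolding okS_def
proof (intro ballI)
  fix u assume fS: "finite S" and c: "card S \<le> 4" and u: "u \<in> S"
  have "card {v \<in> S. fst v \<noteq> fst u} \<le> card (S - {u})"
    by (rule card_mono) (use fS in auto)
  also have "\<dots> \<le> 3" using c u fS by (simp add: card_Diff_singleton)
  finally show "card {v \<in> S. fst v \<noteq> fst u} \<le> 3" .
qed

lemma okS_two:
  assumes "finite X1" "finite X2" "S \<subseteq> X1 \<union> X2" "\<forall>x\<in>X1. fst x = i" "\<forall>x\<in>X2. fst x = j"
    "card X1 \<le> 3" "card X2 \<le> 3"
  shows "okS S"
  unfolding okS_def
proof
  fix u assume u: "u \<in> S"
  show "card {v \<in> S. fst v \<noteq> fst u} \<le> 3"
  proof (cases "u \<in> X1")
    case True
    have "card {v \<in> S. fst v \<noteq> fst u} \<le> card X2"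
      by (rule card_mono) (use assms True in auto)
    then show ?thesis using assms by simp
  next
    case False
    then have "u \<in> X2" using u assms by auto
    have "card {v \<in> S. fst v \<noteq> fst u} \<le> card X1"
      by (rule card_mono) (use assms \<open>u \<in> X2\<close> in auto)
    then show ?thesis using assms by simp
  qed
qed

lemma okS_single:
  assumes h: "\<forall>x\<in>S. fst x = i" shows "okS S"
  unfolding okS_def
proof
  fix u assume u: "u \<in> S"
  have "\<forall>v\<in>S. fst v = fst u" using h u by metis
  then have e: "{v \<in> S. fst v \<noteq> fst u} = {}" by blast
  show "card {v \<in> S. fst v \<noteq> fst u} \<le> 3" unfolding e by simp
qed

lemma see_bound:
  assumes "okS S" "u \<in> S" "T \<subseteq> S" "\<forall>x\<in>T. fst x \<noteq> fst u" "finite S"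
  shows "card T \<le> 3"
proof -
  have "card T \<le> card {v \<in> S. fst v \<noteq> fst u}"
    by (rule card_mono) (use assms in auto)
  also have "\<dots> \<le> 3" using assms unfolding okS_def by auto
  finally show ?thesis .
qed

lemma swap_move:
  assumes fin: "finite V" and cf: "col V f" and c12: "c1 \<noteq> c2"
    and NW: "N1 \<union> N2 = cls V f c1 \<union> cls V f c2" and dis: "N1 \<inter> N2 = {}"
    and ok1: "okS N1" and ok2: "okS N2"
  defines "g \<equiv> \<lambda>v. if v \<in> N1 then c1 else if v \<in> N2 then c2 else f v"
  shows "col V g" "cls V g c1 = N1" "cls V g c2 = N2"
    "\<And>c. c \<noteq> c1 \<Longrightarrow> c \<noteq> c2 \<Longrightarrow> cls V g c = cls V f c"
    "\<And>v. v \<in> V \<Longrightarrow> v \<notin> N1 \<Longrightarrow> v \<notin> N2 \<Longrightarrow> g v = f v \<and> f v \<noteq> c1 \<and> f v \<noteq> c2"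
proof -
  have NV: "N1 \<subseteq> V" "N2 \<subseteq> V" using NW unfolding cls_def by auto
  show g1: "cls V g c1 = N1"
    unfolding cls_def g_def using NV NW c12 dis unfolding cls_def by auto
  show g2: "cls V g c2 = N2"
    unfolding cls_def g_def using NV NW c12 dis unfolding cls_def by auto
  show g3: "\<And>c. c \<noteq> c1 \<Longrightarrow> c \<noteq> c2 \<Longrightarrow> cls V g c = cls V f c"
    unfolding cls_def g_def using NW unfolding cls_def by auto
  show "\<And>v. v \<in> V \<Longrightarrow> v \<notin> N1 \<Longrightarrow> v \<notin> N2 \<Longrightarrow> g v = f v \<and> f v \<noteq> c1 \<and> f v \<noteq> c2"
    unfolding g_def using NW unfolding cls_def by auto
  show "col V g"
    unfolding col_def
  proof
    fix c
    show "okS (cls V g c)"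
      using g1 g2 g3[of c] ok1 ok2 cf unfolding col_def by (cases "c = c1"; cases "c = c2") auto
  qed
qed

lemma cls_sub: "cls V f c \<subseteq> V" unfolding cls_def by auto

lemma done_move:
  assumes fin: "finite V" and cf: "col V f" and c12: "c1 \<noteq> c2"
    and c1V: "c1 \<in> f ` V" and c2V: "c2 \<in> f ` V"
    and N1W: "N1 \<subseteq> cls V f c1 \<union> cls V f c2" and N1U: "N1 \<subseteq> prt V p \<union> prt V q"
    and ne: "N1 \<noteq> {}" and cp: "card (N1 \<inter> prt V p) \<le> 3" and cq: "card (N1 \<inter> prt V q) \<le> 3"
    and ok2: "okS ((cls V f c1 \<union> cls V f c2) - N1)"
  shows "DONE V p q f"
proof -
  let ?W = "cls V f c1 \<union> cls V f c2"
  let ?N2 = "?W - N1"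
  have fN1: "finite N1" using N1W fin cls_sub by (meson finite_Un finite_subset)
  have ok1: "okS N1"
    by (rule okS_two[of "N1 \<inter> prt V p" "N1 \<inter> prt V q" _ p q])
       (use fN1 N1U cp cq in \<open>auto simp: prt_def\<close>)
  define g where "g \<equiv> \<lambda>v. if v \<in> N1 then c1 else if v \<in> ?N2 then c2 else f v"
  have NW: "N1 \<union> ?N2 = ?W" using N1W by auto
  have dis: "N1 \<inter> ?N2 = {}" by auto
  note sm = swap_move[OF fin cf c12 NW dis ok1 ok2, folded g_def]
  have "g ` V \<subseteq> f ` V"
  proof
    fix x assume "x \<in> g ` V"
    then obtain v where v: "v \<in> V" "x = g v" by auto
    show "x \<in> f ` V"
    proof (cases "v \<in> N1 \<or> v \<in> ?N2")
      case True then show ?thesis using v c1V c2V unfolding g_def by auto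
    next
      case False
      then have "g v = f v" unfolding g_def by auto
      then show ?thesis using v by auto
    qed
  qed
  moreover have "goodc V p q g c1" unfolding goodc_def sm(2) using N1U ne cp cq by auto
  ultimately show ?thesis unfolding DONE_def using sm(1) by blast
qed

lemma red_move:
  assumes fin: "finite V" and cf: "col V f" and c12: "c1 \<noteq> c2"
    and m1: "cls V f c1 \<inter> (prt V p \<union> prt V q) \<noteq> {}"
    and m2: "cls V f c2 \<inter> (prt V p \<union> prt V q) \<noteq> {}"
    and N1W: "N1 \<subseteq> cls V f c1 \<union> cls V f c2"
    and WU: "(cls V f c1 \<union> cls V f c2) \<inter> (prt V p \<union> prt V q) \<subseteq> N1"
    and ok1: "okS N1"
    and ok2: "okS ((cls V f c1 \<union> cls V f c2) - N1)"
  shows "RED V p q f"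
proof -
  let ?U = "prt V p \<union> prt V q"
  let ?W = "cls V f c1 \<union> cls V f c2"
  let ?N2 = "?W - N1"
  define g where "g \<equiv> \<lambda>v. if v \<in> N1 then c1 else if v \<in> ?N2 then c2 else f v"
  have NW: "N1 \<union> ?N2 = ?W" using N1W by auto
  have dis: "N1 \<inter> ?N2 = {}" by auto
  note sm = swap_move[OF fin cf c12 NW dis ok1 ok2, folded g_def]
  have c1U: "c1 \<in> f ` ?U" using m1 unfolding cls_def by auto
  have c2U: "c2 \<in> f ` ?U" using m2 unfolding cls_def by auto
  have "g ` V \<subseteq> f ` V"
  proof
    fix x assume "x \<in> g ` V"
    then obtain v where v: "v \<in> V" "x = g v" by auto
    show "x \<in> f ` V"
    proof (cases "v \<in> N1 \<or> v \<in> ?N2")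
      case True then show ?thesis using v c1U c2U unfolding g_def prt_def by auto
    next
      case False
      then have "g v = f v" unfolding g_def by auto
      then show ?thesis using v by auto
    qed
  qed
  moreover have "g ` ?U \<subseteq> f ` ?U - {c2}"
  proof
    fix x assume "x \<in> g ` ?U"
    then obtain v where v: "v \<in> ?U" "x = g v" by auto
    have vV: "v \<in> V" using v unfolding prt_def by auto
    show "x \<in> f ` ?U - {c2}"
    proof (cases "v \<in> N1")
      case True then show ?thesis using v c1U c12 unfolding g_def by auto
    next
      case False
      then have "v \<notin> ?N2" using WU v by auto
      then have "g v = f v" "f v \<noteq> c2" using False vV unfolding g_def cls_def by auto
      then show ?thesis using v by auto
    qed
  qed
  moreover have "finite (f ` ?U)" using fin unfolding prt_def by auto
  ultimately have "card (g ` ?U) < card (f ` ?U)"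
  proof -
    assume a: "g ` ?U \<subseteq> f ` ?U - {c2}" "finite (f ` ?U)"
    have "card (g ` ?U) \<le> card (f ` ?U - {c2})" using a by (intro card_mono) auto
    also have "\<dots> < card (f ` ?U)" using a c2U by (metis card_Diff1_less)
    finally show ?thesis .
  qed
  then show ?thesis unfolding RED_def using sm(1) \<open>g ` V \<subseteq> f ` V\<close> by blast
qed

lemma cls_fin: "finite V \<Longrightarrow> finite (cls V f c)" using cls_sub finite_subset by metis

lemma gen_move:
  assumes fin: "finite V" and cf: "col V f" and c12: "c1 \<noteq> c2" and pq: "p \<noteq> q"
    and m1: "cls V f c1 \<inter> (prt V p \<union> prt V q) \<noteq> {}"
    and m2: "cls V f c2 \<inter> (prt V p \<union> prt V q) \<noteq> {}"
    and sz: "card (cls V f c1) + card (cls V f c2) \<le> 8"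
  shows "DONE V p q f \<or> RED V p q f"
proof -
  define U where "U = prt V p \<union> prt V q"
  define W where "W = cls V f c1 \<union> cls V f c2"
  define Q where "Q = W \<inter> U"
  have fW: "finite W" unfolding W_def using cls_fin fin by auto
  have cW: "card W \<le> 8" unfolding W_def using sz card_Un_le[of "cls V f c1" "cls V f c2"] by linarith
  have fQ: "finite Q" using fW Q_def by auto
  have QW: "Q \<subseteq> W" unfolding Q_def by auto
  have c1V: "c1 \<in> f ` V" using m1 unfolding cls_def by auto
  have c2V: "c2 \<in> f ` V" using m2 unfolding cls_def by auto
  show ?thesis
  proof (cases "card Q \<le> 4")
    case True
    have "min (4 - card Q) (card (W - Q)) \<le> card (W - Q)" by simp
    then obtain F where F: "F \<subseteq> W - Q" "card F = min (4 - card Q) (card (W - Q))" "finite F"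
      by (rule obtain_subset_with_card_n)
    define N1 where "N1 = Q \<union> F"
    have cN1: "card N1 = card Q + card F" unfolding N1_def
      using F fQ by (subst card_Un_disjoint) auto
    have N1W: "N1 \<subseteq> W" using F QW N1_def by auto
    have fN1: "finite N1" using N1W fW finite_subset by auto
    have ok1: "okS N1" using cN1 F True fN1 by (intro okS_card4) auto
    have cWN: "card (W - N1) = card W - card N1" using N1W fW fN1 by (simp add: card_Diff_subset)
    have ok2: "okS (W - N1)"
    proof (cases "card F = card (W - Q)")
      case True
      then have "F = W - Q" using F fW by (metis card_subset_eq finite_Diff)
      then have e: "W - N1 = {}" unfolding N1_def by auto
      show ?thesis unfolding e by (intro okS_card4) auto
    next
      case False
      then have "card F = 4 - card Q" using F by auto
      then have "card N1 = 4" using cN1 \<open>card Q \<le> 4\<close> by auto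
      then show ?thesis using cWN cW fW by (intro okS_card4) auto
    qed
    have "RED V p q f"
      by (rule red_move[OF fin cf c12 m1 m2, of N1])
         (use N1W ok1 ok2 in \<open>auto simp: W_def N1_def Q_def U_def\<close>)
    then show ?thesis by blast
  next
    case False
    define QA where "QA = Q \<inter> prt V p"
    define QB where "QB = Q \<inter> prt V q"
    have QAB: "Q = QA \<union> QB" "QA \<inter> QB = {}" using pq unfolding QA_def QB_def Q_def U_def prt_def by auto
    have fQA: "finite QA" "finite QB" using fQ QA_def QB_def by auto
    have cQ: "card Q = card QA + card QB" using QAB fQA by (simp add: card_Un_disjoint)
    have "min 3 (card QA) \<le> card QA" by simp
    then obtain SA where SA: "SA \<subseteq> QA" "card SA = min 3 (card QA)" "finite SA"
      by (rule obtain_subset_with_card_n)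
    have "min 3 (card QB) \<le> card QB" by simp
    then obtain SB where SB: "SB \<subseteq> QB" "card SB = min 3 (card QB)" "finite SB"
      by (rule obtain_subset_with_card_n)
    define N1 where "N1 = SA \<union> SB"
    have cN1: "card N1 = card SA + card SB" unfolding N1_def
      using SA SB QAB by (subst card_Un_disjoint) auto
    have N1W: "N1 \<subseteq> W" using SA SB QAB QW N1_def by auto
    have fN1: "finite N1" using N1W fW finite_subset by auto
    show ?thesis
    proof (cases "card N1 \<ge> 4")
      case True
      have cWN: "card (W - N1) = card W - card N1" using N1W fW fN1 by (simp add: card_Diff_subset)
      have ok2: "okS (W - N1)" using cWN cW True fW by (intro okS_card4) auto
      have NA: "N1 \<inter> prt V p = SA" using SA SB pq unfolding N1_def QA_def QB_def prt_def by auto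
      have NB: "N1 \<inter> prt V q = SB" using SA SB pq unfolding N1_def QA_def QB_def prt_def by auto
      have "DONE V p q f"
        by (rule done_move[OF fin cf c12 c1V c2V, of N1])
           (use N1W ok2 NA NB SA SB True in \<open>auto simp: W_def N1_def QA_def QB_def Q_def U_def\<close>)
      then show ?thesis by blast
    next
      case False
      have "card QA = 0 \<or> card QB = 0" using False cN1 SA SB cQ \<open>\<not> card Q \<le> 4\<close>
        by (auto simp: min_def split: if_splits)
      then have "QA = {} \<or> QB = {}" using fQA by auto
      then have single: "\<exists>i. \<forall>x\<in>Q. fst x = i" using QAB unfolding QA_def QB_def prt_def by auto
      have ok1: "okS Q" using single okS_single by blast
      have cWN: "card (W - Q) = card W - card Q" using QW fW fQ by (simp add: card_Diff_subset)
      have ok2: "okS (W - Q)" using cWN cW \<open>\<not> card Q \<le> 4\<close> fW by (intro okS_card4) auto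
      have "RED V p q f"
        by (rule red_move[OF fin cf c12 m1 m2, of Q])
           (use QW ok1 ok2 in \<open>auto simp: W_def Q_def U_def\<close>)
      then show ?thesis by blast
    qed
  qed
qed

lemma big_part:
  assumes "okS C" "finite C" "x \<in> C"
  shows "card C \<le> card {v\<in>C. fst v = fst x} + 3"
proof -
  have e: "{v\<in>C. fst v = fst x} \<union> {v\<in>C. fst v \<noteq> fst x} = C" by auto
  have "card ({v\<in>C. fst v = fst x} \<union> {v\<in>C. fst v \<noteq> fst x}) \<le> card {v\<in>C. fst v = fst x} + card {v\<in>C. fst v \<noteq> fst x}"
    by (rule card_Un_le)
  then have "card C \<le> card {v\<in>C. fst v = fst x} + card {v\<in>C. fst v \<noteq> fst x}"
    unfolding e .
  moreover have "card {v\<in>C. fst v \<noteq> fst x} \<le> 3" using assms unfolding okS_def by auto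
  ultimately show ?thesis by linarith
qed

lemma three_parts:
  assumes ok: "okS C" and fC: "finite C" and c5: "5 \<le> card C" and xyz: "x \<in> C" "y \<in> C" "z \<in> C"
    and d: "fst x \<noteq> fst y" "fst x \<noteq> fst z" "fst y \<noteq> fst z"
  shows False
proof -
  have "card {v\<in>C. fst v = fst x} \<ge> 2" using big_part[OF ok fC xyz(1)] c5 by linarith
  moreover have "card {v\<in>C. fst v = fst y} \<ge> 2" using big_part[OF ok fC xyz(2)] c5 by linarith
  moreover have "card ({v\<in>C. fst v = fst x} \<union> {v\<in>C. fst v = fst y}) =
      card {v\<in>C. fst v = fst x} + card {v\<in>C. fst v = fst y}"
    using fC d by (intro card_Un_disjoint) auto
  moreover have "card ({v\<in>C. fst v = fst x} \<union> {v\<in>C. fst v = fst y}) \<le> 3"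
    by (rule see_bound[OF ok xyz(3)]) (use fC d in auto)
  ultimately show False by linarith
qed

lemma side_move:
  assumes fin: "finite V" and cf: "col V f" and pq: "p \<noteq> q"
    and m1: "cls V f c1 \<inter> (prt V p \<union> prt V q) \<noteq> {}"
    and m2: "cls V f c2 \<inter> (prt V p \<union> prt V q) \<noteq> {}"
    and e1: "cls V f c1 \<inter> prt V q = {}" and e2: "cls V f c2 \<inter> prt V p = {}"
    and s1: "\<forall>x\<in>cls V f c1 - (prt V p \<union> prt V q). fst x = j1"
    and s2: "\<forall>x\<in>cls V f c2 - (prt V p \<union> prt V q). fst x = j2"
    and r1: "card (cls V f c1 - (prt V p \<union> prt V q)) \<le> 3"
    and r2: "card (cls V f c2 - (prt V p \<union> prt V q)) \<le> 3"
    and a1: "card (cls V f c1 \<inter> prt V p) \<le> 3"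
    and a2: "card (cls V f c2 \<inter> prt V q) \<le> 3"
  shows "DONE V p q f"
proof -
  let ?U = "prt V p \<union> prt V q"
  let ?C1 = "cls V f c1" and ?C2 = "cls V f c2"
  have c12: "c1 \<noteq> c2"
  proof
    assume "c1 = c2"
    then show False using m1 e1 e2 by auto
  qed
  have c1V: "c1 \<in> f ` V" using m1 unfolding cls_def by auto
  have c2V: "c2 \<in> f ` V" using m2 unfolding cls_def by auto
  define N1 where "N1 = (?C1 \<union> ?C2) \<inter> ?U"
  have NA: "N1 \<inter> prt V p = ?C1 \<inter> prt V p" unfolding N1_def using e2 by auto
  have NB: "N1 \<inter> prt V q = ?C2 \<inter> prt V q" unfolding N1_def using e1 by auto
  have WN: "(?C1 \<union> ?C2) - N1 = (?C1 - ?U) \<union> (?C2 - ?U)" unfolding N1_def by auto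
  have ok2: "okS ((?C1 \<union> ?C2) - N1)"
    unfolding WN by (rule okS_two[of "?C1 - ?U" "?C2 - ?U" _ j1 j2]) (use s1 s2 r1 r2 cls_fin fin in auto)
  have h1: "N1 \<subseteq> ?C1 \<union> ?C2" "N1 \<subseteq> ?U" "N1 \<noteq> {}" using m1 unfolding N1_def by auto
  show ?thesis
    using done_move[OF fin cf c12 c1V c2V h1] NA NB a1 a2 ok2 by simp
qed

lemma col_ok: "col V f \<Longrightarrow> okS (cls V f c)" unfolding col_def by auto

lemma ext_AB:
  assumes fin: "finite V" and cf: "col V f" and r: "r \<in> cls V f c" "fst r \<noteq> j"
  shows "card (cls V f c \<inter> prt V j) \<le> 3"
  by (rule see_bound[OF col_ok[OF cf] r(1)]) (use r cls_fin[OF fin] in \<open>auto simp: prt_def\<close>)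

lemma ext_R:
  assumes fin: "finite V" and cf: "col V f" and u: "u \<in> cls V f c" "fst u = p \<or> fst u = q"
  shows "card (cls V f c - (prt V p \<union> prt V q)) \<le> 3"
  by (rule see_bound[OF col_ok[OF cf] u(1)]) (use u cls_fin[OF fin] in \<open>auto simp: prt_def cls_def\<close>)

lemma side_exists:
  assumes fin: "finite V" and cf: "col V f" and pq: "p \<noteq> q" and cp: "3 \<le> card (prt V p)"
    and H4: "\<forall>c. cls V f c \<inter> (prt V p \<union> prt V q) \<noteq> {} \<longrightarrow> \<not> cls V f c \<subseteq> prt V p \<union> prt V q"
    and H9: "\<forall>c1 c2. c1 \<noteq> c2 \<longrightarrow> cls V f c1 \<inter> (prt V p \<union> prt V q) \<noteq> {} \<longrightarrow>
       cls V f c2 \<inter> (prt V p \<union> prt V q) \<noteq> {} \<longrightarrow> 9 \<le> card (cls V f c1) + card (cls V f c2)"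
  shows "\<exists>c. cls V f c \<inter> (prt V p \<union> prt V q) \<noteq> {} \<and> cls V f c \<inter> prt V q = {} \<and>
     (\<exists>j. \<forall>x\<in>cls V f c - (prt V p \<union> prt V q). fst x = j) \<and>
     card (cls V f c - (prt V p \<union> prt V q)) \<le> 3 \<and> card (cls V f c \<inter> prt V p) \<le> 3"
proof (cases "\<exists>a\<in>prt V p. 5 \<le> card (cls V f (f a))")
  case True
  then obtain a where a: "a \<in> prt V p" "5 \<le> card (cls V f (f a))" by blast
  let ?C = "cls V f (f a)"
  have aC: "a \<in> ?C" using a unfolding prt_def cls_def by auto
  have fa: "fst a = p" using a unfolding prt_def by auto
  have m: "?C \<inter> (prt V p \<union> prt V q) \<noteq> {}" using aC a by auto
  then obtain r where r: "r \<in> ?C" "r \<notin> prt V p \<union> prt V q" using H4 by blast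
  have rV: "r \<in> V" using r cls_sub by auto
  have fr: "fst r \<noteq> p" "fst r \<noteq> q" using r rV unfolding prt_def by auto
  have ok: "okS ?C" by (rule col_ok[OF cf])
  have fC: "finite ?C" by (rule cls_fin[OF fin])
  have e: "?C \<inter> prt V q = {}"
  proof (rule ccontr)
    assume "?C \<inter> prt V q \<noteq> {}"
    then obtain x where x: "x \<in> ?C" "fst x = q" unfolding prt_def by auto
    have d: "fst a \<noteq> fst x" "fst a \<noteq> fst r" "fst x \<noteq> fst r" using fa x fr pq by auto
    show False by (rule three_parts[OF ok fC a(2) aC x(1) r(1) d])
  qed
  have s: "\<forall>x\<in>?C - (prt V p \<union> prt V q). fst x = fst r"
  proof (intro ballI, rule ccontr)
    fix x assume x: "x \<in> ?C - (prt V p \<union> prt V q)" "fst x \<noteq> fst r"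
    have "x \<in> V" using x cls_sub[of V f] by blast
    then have "fst x \<noteq> p" "fst x \<noteq> q" using x unfolding prt_def by auto
    then have d: "fst a \<noteq> fst x" "fst a \<noteq> fst r" "fst x \<noteq> fst r" using fa x fr by auto
    have xC: "x \<in> ?C" using x by blast
    show False by (rule three_parts[OF ok fC a(2) aC xC r(1) d])
  qed
  have b1: "card (?C - (prt V p \<union> prt V q)) \<le> 3" by (rule ext_R[OF fin cf aC]) (use fa in auto)
  have b2: "card (?C \<inter> prt V p) \<le> 3" by (rule ext_AB[OF fin cf r(1)]) (use fr in auto)
  show ?thesis using m e s b1 b2 by blast
next
  case False
  then have small: "\<forall>a\<in>prt V p. card (cls V f (f a)) \<le> 4" by auto
  have "prt V p \<noteq> {}" using cp by auto
  then obtain a0 where a0: "a0 \<in> prt V p" by auto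
  let ?C = "cls V f (f a0)"
  have allin: "prt V p \<subseteq> ?C"
  proof
    fix a assume a: "a \<in> prt V p"
    have "f a = f a0"
    proof (rule ccontr)
      assume ne: "f a \<noteq> f a0"
      have "a \<in> cls V f (f a)" "a0 \<in> ?C" using a a0 unfolding prt_def cls_def by auto
      then have m1: "cls V f (f a) \<inter> (prt V p \<union> prt V q) \<noteq> {}" "?C \<inter> (prt V p \<union> prt V q) \<noteq> {}"
        using a a0 by auto
      have "9 \<le> card (cls V f (f a)) + card ?C" using H9[rule_format, OF ne m1] .
      moreover have "card (cls V f (f a)) \<le> 4" "card ?C \<le> 4" using small a a0 by auto
      ultimately show False by linarith
    qed
    then show "a \<in> ?C" using a unfolding prt_def cls_def by auto
  qed
  have a0C: "a0 \<in> ?C" using allin a0 by auto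
  have m: "?C \<inter> (prt V p \<union> prt V q) \<noteq> {}" using a0C a0 by auto
  then obtain r where r: "r \<in> ?C" "r \<notin> prt V p \<union> prt V q" using H4 by blast
  have rV: "r \<in> V" using r cls_sub by auto
  have fr: "fst r \<noteq> p" "fst r \<noteq> q" using r rV unfolding prt_def by auto
  have fC: "finite ?C" by (rule cls_fin[OF fin])
  have b2: "card (?C \<inter> prt V p) \<le> 3" by (rule ext_AB[OF fin cf r(1)]) (use fr in auto)
  have "?C \<inter> prt V p = prt V p" using allin by auto
  then have cp3: "card (prt V p) = 3" using b2 cp by auto
  have fp: "finite (prt V p)" using fin unfolding prt_def by auto
  have sub: "insert r (prt V p) \<subseteq> ?C" using allin r by auto
  have rn: "r \<notin> prt V p" using r by blast
  have c4: "card (insert r (prt V p)) = 4" using cp3 fp rn by simp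
  have "card ?C \<le> 4" using small a0 by blast
  then have eq: "insert r (prt V p) = ?C" using card_seteq[OF fC sub] c4 by linarith
  have e: "?C \<inter> prt V q = {}"
  proof -
    have "insert r (prt V p) \<inter> prt V q = {}" using pq fr unfolding prt_def by auto
    then show ?thesis unfolding eq .
  qed
  have d: "?C - (prt V p \<union> prt V q) = {r}"
  proof -
    have "insert r (prt V p) - (prt V p \<union> prt V q) = {r}" using r by blast
    then show ?thesis unfolding eq .
  qed
  have j: "\<exists>j. \<forall>x\<in>?C - (prt V p \<union> prt V q). fst x = j" unfolding d by auto
  have cr: "card (?C - (prt V p \<union> prt V q)) \<le> 3" unfolding d by simp
  show ?thesis using m e j cr b2 by blast
qed

lemma case4:
  assumes fin: "finite V" and cf: "col V f" and pq: "p \<noteq> q"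
    and cp: "3 \<le> card (prt V p)" and cq: "3 \<le> card (prt V q)"
    and H4: "\<forall>c. cls V f c \<inter> (prt V p \<union> prt V q) \<noteq> {} \<longrightarrow> \<not> cls V f c \<subseteq> prt V p \<union> prt V q"
  shows "DONE V p q f \<or> RED V p q f"
proof (cases "\<exists>c1 c2. c1 \<noteq> c2 \<and> cls V f c1 \<inter> (prt V p \<union> prt V q) \<noteq> {} \<and>
     cls V f c2 \<inter> (prt V p \<union> prt V q) \<noteq> {} \<and> card (cls V f c1) + card (cls V f c2) \<le> 8")
  case True
  then obtain c1 c2 where c: "c1 \<noteq> c2" "cls V f c1 \<inter> (prt V p \<union> prt V q) \<noteq> {}"
     "cls V f c2 \<inter> (prt V p \<union> prt V q) \<noteq> {}" "card (cls V f c1) + card (cls V f c2) \<le> 8"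
    by blast
  show ?thesis by (rule gen_move[OF fin cf c(1) pq c(2) c(3) c(4)])
next
  case False
  have H9: "\<forall>c1 c2. c1 \<noteq> c2 \<longrightarrow> cls V f c1 \<inter> (prt V p \<union> prt V q) \<noteq> {} \<longrightarrow>
       cls V f c2 \<inter> (prt V p \<union> prt V q) \<noteq> {} \<longrightarrow> 9 \<le> card (cls V f c1) + card (cls V f c2)"
  proof (intro allI impI)
    fix c1 c2 assume "c1 \<noteq> c2" "cls V f c1 \<inter> (prt V p \<union> prt V q) \<noteq> {}"
       "cls V f c2 \<inter> (prt V p \<union> prt V q) \<noteq> {}"
    then have "\<not> card (cls V f c1) + card (cls V f c2) \<le> 8" using False by blast
    then show "9 \<le> card (cls V f c1) + card (cls V f c2)" by linarith
  qed
  have U: "prt V q \<union> prt V p = prt V p \<union> prt V q" by (rule Un_commute)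
  have H4': "\<forall>c. cls V f c \<inter> (prt V q \<union> prt V p) \<noteq> {} \<longrightarrow> \<not> cls V f c \<subseteq> prt V q \<union> prt V p"
    unfolding U by (rule H4)
  have H9': "\<forall>c1 c2. c1 \<noteq> c2 \<longrightarrow> cls V f c1 \<inter> (prt V q \<union> prt V p) \<noteq> {} \<longrightarrow>
       cls V f c2 \<inter> (prt V q \<union> prt V p) \<noteq> {} \<longrightarrow> 9 \<le> card (cls V f c1) + card (cls V f c2)"
    unfolding U by (rule H9)
  obtain c1 where c1: "cls V f c1 \<inter> (prt V p \<union> prt V q) \<noteq> {}" "cls V f c1 \<inter> prt V q = {}"
     "\<exists>j. \<forall>x\<in>cls V f c1 - (prt V p \<union> prt V q). fst x = j"
     "card (cls V f c1 - (prt V p \<union> prt V q)) \<le> 3" "card (cls V f c1 \<inter> prt V p) \<le> 3"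
    using side_exists[OF fin cf pq cp H4 H9] by blast
  obtain c2 where c2: "cls V f c2 \<inter> (prt V q \<union> prt V p) \<noteq> {}" "cls V f c2 \<inter> prt V p = {}"
     "\<exists>j. \<forall>x\<in>cls V f c2 - (prt V q \<union> prt V p). fst x = j"
     "card (cls V f c2 - (prt V q \<union> prt V p)) \<le> 3" "card (cls V f c2 \<inter> prt V q) \<le> 3"
    using side_exists[OF fin cf pq[symmetric] cq H4' H9'] by blast
  obtain j1 where j1: "\<forall>x\<in>cls V f c1 - (prt V p \<union> prt V q). fst x = j1" using c1(3) by blast
  obtain j2 where j2: "\<forall>x\<in>cls V f c2 - (prt V p \<union> prt V q). fst x = j2" using c2(3) unfolding U by blast
  have c2': "cls V f c2 \<inter> (prt V p \<union> prt V q) \<noteq> {}" "card (cls V f c2 - (prt V p \<union> prt V q)) \<le> 3"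
    using c2(1,4) unfolding U by auto
  have "DONE V p q f" by (rule side_move[OF fin cf pq c1(1) c2'(1) c1(2) c2(2) j1 j2 c1(4) c2'(2) c1(5) c2(5)])
  then show ?thesis by blast
qed

lemma card_Un3_le: "card (A \<union> B \<union> C) \<le> card A + card B + card (C::'a set)"
  by (meson add_le_mono1 card_Un_le le_trans)

lemma case3_b:
  assumes fin: "finite V" and cf: "col V f" and pq: "p \<noteq> q"
    and cp5: "card (prt V p) \<le> 5" and cq5: "card (prt V q) \<le> 5"
    and nogood: "\<forall>c. \<not> goodc V p q f c"
    and P: "cls V f c0 \<subseteq> prt V p" "4 \<le> card (cls V f c0)"
    and b: "b \<in> prt V q"
  shows "DONE V p q f \<or> (card (cls V f (f b)) \<le> 4 \<and> card (cls V f (f b) \<inter> prt V q) \<le> 1)"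
proof -
  define Pc where "Pc = cls V f c0"
  define D where "D = cls V f (f b)"
  define U where "U = prt V p \<union> prt V q"
  have bV: "b \<in> V" and fb: "fst b = q" using b unfolding prt_def by auto
  have bD: "b \<in> D" unfolding D_def cls_def using bV by auto
  have bP: "b \<notin> Pc" using P(1) fb pq unfolding Pc_def prt_def by auto
  have dc: "c0 \<noteq> f b" using bP bV unfolding Pc_def cls_def by auto
  have DP: "D \<inter> Pc = {}" unfolding D_def Pc_def cls_def using dc by auto
  have fP: "finite Pc" and fD: "finite D" unfolding Pc_def D_def using cls_fin[OF fin] by auto
  have fpp: "finite (prt V p)" and fpq: "finite (prt V q)" using fin unfolding prt_def by auto
  have okD: "okS D" unfolding D_def by (rule col_ok[OF cf])
  have DV: "D \<subseteq> V" unfolding D_def by (rule cls_sub)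
  have c0V: "c0 \<in> f ` V" using P(2) unfolding cls_def by (metis (mono_tags, lifting) card.empty empty_Collect_eq
        image_eqI not_numeral_le_zero)
  have dV: "f b \<in> f ` V" using bV by auto
  have kA: "card (D \<inter> prt V p) + card Pc \<le> card (prt V p)"
  proof -
    have "card ((D \<inter> prt V p) \<union> Pc) = card (D \<inter> prt V p) + card Pc"
      using DP fD fP by (intro card_Un_disjoint) auto
    moreover have "card ((D \<inter> prt V p) \<union> Pc) \<le> card (prt V p)"
      using P(1) fpp unfolding Pc_def by (intro card_mono) auto
    ultimately show ?thesis by linarith
  qed
  have k1: "card (D \<inter> prt V p) \<le> 1" using kA cp5 P(2) unfolding Pc_def by linarith
  show ?thesis
  proof (cases "D \<subseteq> U")
    case True
    have ng: "\<not> goodc V p q f (f b)" using nogood by blast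
    have "D \<noteq> {}" using bD by auto
    then have "card (D \<inter> prt V q) \<ge> 4" using ng True k1 unfolding goodc_def D_def U_def by auto
    have Dq: "D \<subseteq> prt V q"
    proof
      fix x assume x: "x \<in> D"
      show "x \<in> prt V q"
      proof (rule ccontr)
        assume "x \<notin> prt V q"
        then have xp: "x \<in> prt V p" using x True U_def by auto
        have "card (D \<inter> prt V q) \<le> 3"
          by (rule see_bound[OF okD x]) (use xp pq fD in \<open>auto simp: prt_def\<close>)
        then show False using \<open>card (D \<inter> prt V q) \<ge> 4\<close> by linarith
      qed
    qed
    have cD: "card D \<le> 5" using card_mono[OF fpq Dq] cq5 by linarith
    have cD4: "card D \<ge> 4" using \<open>card (D \<inter> prt V q) \<ge> 4\<close> card_mono[OF fD, of "D \<inter> prt V q"] by auto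
    have cP: "card Pc \<le> 5" using card_mono[OF fpp P(1)] cp5 unfolding Pc_def by linarith
    have "3 \<le> card Pc" using P(2) Pc_def by auto
    then obtain SA where SA: "SA \<subseteq> Pc" "card SA = 3" "finite SA" by (rule obtain_subset_with_card_n)
    have "3 \<le> card D" using cD4 by auto
    then obtain SB where SB: "SB \<subseteq> D" "card SB = 3" "finite SB" by (rule obtain_subset_with_card_n)
    define N1 where "N1 = SA \<union> SB"
    have NA: "N1 \<inter> prt V p = SA" using SA SB Dq P(1) pq unfolding N1_def Pc_def prt_def by auto
    have NB: "N1 \<inter> prt V q = SB" using SA SB Dq P(1) pq unfolding N1_def Pc_def prt_def by auto
    have h1: "N1 \<subseteq> cls V f c0 \<union> cls V f (f b)" "N1 \<subseteq> prt V p \<union> prt V q" "N1 \<noteq> {}"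
      using SA SB Dq P(1) unfolding N1_def Pc_def D_def by auto
    have WN: "(cls V f c0 \<union> cls V f (f b)) - N1 \<subseteq> (Pc - SA) \<union> (D - SB)"
      unfolding N1_def Pc_def D_def by auto
    have "card ((Pc - SA) \<union> (D - SB)) \<le> card (Pc - SA) + card (D - SB)" by (rule card_Un_le)
    moreover have "card (Pc - SA) = card Pc - 3" using SA fP by (simp add: card_Diff_subset)
    moreover have "card (D - SB) = card D - 3" using SB fD by (simp add: card_Diff_subset)
    ultimately have "card ((Pc - SA) \<union> (D - SB)) \<le> 4" using cP cD by linarith
    then have "okS ((Pc - SA) \<union> (D - SB))" using fP fD by (intro okS_card4) auto
    moreover have "finite ((Pc - SA) \<union> (D - SB))" using fP fD by blast
    ultimately have ok2: "okS ((cls V f c0 \<union> cls V f (f b)) - N1)"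
      using WN okS_subset by blast
    have "DONE V p q f"
      using done_move[OF fin cf dc c0V dV h1] NA NB SA SB ok2 by simp
    then show ?thesis by blast
  next
    case False
    then obtain r where r: "r \<in> D" "r \<notin> U" by auto
    have rV: "r \<in> V" using r D_def cls_sub by blast
    have fr: "fst r \<noteq> p" "fst r \<noteq> q" using r rV unfolding U_def prt_def by auto
    have bq: "card (D \<inter> prt V q) \<le> 3" unfolding D_def by (rule ext_AB[OF fin cf]) (use r fr D_def in auto)
    have bR: "card (D - U) \<le> 3" unfolding D_def U_def by (rule ext_R[OF fin cf]) (use bD fb D_def in auto)
    define k where "k = card (D \<inter> prt V p)"
    have "3 - k \<le> card Pc" using P(2) Pc_def by auto
    then obtain S where S: "S \<subseteq> Pc" "card S = 3 - k" "finite S" by (rule obtain_subset_with_card_n)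
    define N1 where "N1 = S \<union> (D \<inter> U)"
    have h1: "N1 \<subseteq> cls V f c0 \<union> cls V f (f b)" "N1 \<subseteq> prt V p \<union> prt V q" "N1 \<noteq> {}"
      using S P(1) bD b unfolding N1_def Pc_def D_def U_def by auto
    have NA: "N1 \<inter> prt V p = S \<union> (D \<inter> prt V p)"
      using S P(1) unfolding N1_def Pc_def U_def by auto
    have "card (S \<union> (D \<inter> prt V p)) = card S + card (D \<inter> prt V p)"
      using S DP fD by (intro card_Un_disjoint) auto
    then have cNA: "card (N1 \<inter> prt V p) = 3" unfolding NA using S k1 k_def by simp
    have NB: "N1 \<inter> prt V q = D \<inter> prt V q"
      using S P(1) pq unfolding N1_def Pc_def U_def prt_def by auto
    have WN: "(cls V f c0 \<union> cls V f (f b)) - N1 = (Pc - S) \<union> (D - U)"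
      using S P(1) DP unfolding N1_def Pc_def D_def U_def by auto
    have cPS: "card (Pc - S) = card Pc - (3 - k)" using S fP by (simp add: card_Diff_subset)
    have cPS2: "card (Pc - S) \<le> 2" using cPS kA cp5 k_def k1 P(2) Pc_def by linarith
    have fR: "finite (D - U)" using fD by auto
    have gen: "DONE V p q f" if ok2: "okS ((Pc - S) \<union> (D - U))"
    proof -
      have "okS ((cls V f c0 \<union> cls V f (f b)) - N1)" unfolding WN by (rule ok2)
      then show ?thesis using done_move[OF fin cf dc c0V dV h1] cNA NB bq by simp
    qed
    show ?thesis
    proof (cases "card (Pc - S) + card (D - U) \<le> 4")
      case True
      have "card ((Pc - S) \<union> (D - U)) \<le> 4" using card_Un_le[of "Pc - S" "D - U"] True by linarith
      then have "okS ((Pc - S) \<union> (D - U))" using fP fD by (intro okS_card4) auto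
      then show ?thesis using gen by blast
    next
      case c5: False
      show ?thesis
      proof (cases "\<exists>j. \<forall>x\<in>D - U. fst x = j")
        case True
        then obtain j where j: "\<forall>x\<in>D - U. fst x = j" by blast
        have "okS ((Pc - S) \<union> (D - U))"
          by (rule okS_two[of "Pc - S" "D - U" _ p j]) (use fP fR j P(1) cPS2 bR in \<open>auto simp: Pc_def prt_def\<close>)
        then show ?thesis using gen by blast
      next
        case ns: False
        have cR3: "card (D - U) = 3" using c5 cPS2 bR by linarith
        have "card ((D \<inter> prt V p) \<union> (D - U)) \<le> 3"
          by (rule see_bound[OF okD bD]) (use fb fD pq DV in \<open>auto simp: U_def prt_def\<close>)
        moreover have "card ((D \<inter> prt V p) \<union> (D - U)) = card (D \<inter> prt V p) + card (D - U)"
          using fD by (intro card_Un_disjoint) (auto simp: U_def)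
        ultimately have k0: "card (D \<inter> prt V p) = 0" using cR3 by linarith
        have rR: "r \<in> D - U" using r by auto
        obtain r2 where r2: "r2 \<in> D - U" "fst r2 \<noteq> fst r" using ns by blast
        have rr: "r \<noteq> r2" using r2 by auto
        have "card (D - U - {r, r2}) = 1" using cR3 rR r2 fR rr by (simp add: card_Diff_subset)
        then obtain r3 where r3: "r3 \<in> D - U" "r3 \<noteq> r" "r3 \<noteq> r2"
          by (metis Diff_iff card_1_singletonE insertCI)
        obtain rs o1 o2 where ro: "rs \<in> D - U" "o1 \<in> D - U" "o2 \<in> D - U" "o1 \<noteq> o2"
            "fst o1 \<noteq> fst rs" "fst o2 \<noteq> fst rs"
        proof (cases "fst r3 = fst r")
          case True
          then show ?thesis using that[of r2 r r3] r2 r3 rR by auto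
        next
          case False
          then show ?thesis using that[of r r2 r3] r2 r3 rR by auto
        qed
        have rsV: "rs \<in> V" using ro D_def cls_sub by blast
        have frs: "fst rs \<noteq> q" using ro rsV unfolding U_def prt_def by auto
        have "card ((D \<inter> prt V q) \<union> {o1, o2}) \<le> 3"
          by (rule see_bound[OF okD, of rs]) (use ro frs fD in \<open>auto simp: prt_def\<close>)
        moreover have "card ((D \<inter> prt V q) \<union> {o1, o2}) = card (D \<inter> prt V q) + 2"
        proof -
          have "o1 \<notin> prt V q" "o2 \<notin> prt V q" using ro unfolding U_def by auto
          then show ?thesis using fD ro by (subst card_Un_disjoint) auto
        qed
        ultimately have q1: "card (D \<inter> prt V q) \<le> 1" by linarith
        have "D = (D \<inter> prt V p) \<union> (D \<inter> prt V q) \<union> (D - U)" unfolding U_def by auto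
        then have "card D \<le> card (D \<inter> prt V p) + card (D \<inter> prt V q) + card (D - U)"
          by (metis card_Un3_le)
        then have "card D \<le> 4" using k0 q1 cR3 by linarith
        then show ?thesis using q1 unfolding D_def by blast
      qed
    qed
  qed
qed


lemma case3:
  assumes fin: "finite V" and cf: "col V f" and pq: "p \<noteq> q"
    and cp5: "card (prt V p) \<le> 5" and cq5: "card (prt V q) \<le> 5" and cq3: "3 \<le> card (prt V q)"
    and nogood: "\<forall>c. \<not> goodc V p q f c"
    and P: "cls V f c0 \<subseteq> prt V p" "4 \<le> card (cls V f c0)"
  shows "DONE V p q f \<or> RED V p q f"
proof -
  have "prt V q \<noteq> {}" using cq3 by auto
  then obtain b0 where b0: "b0 \<in> prt V q" by auto
  note B0 = case3_b[OF fin cf pq cp5 cq5 nogood P b0]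
  show ?thesis
  proof (cases "DONE V p q f")
    case True then show ?thesis by blast
  next
    case nd: False
    then have s0: "card (cls V f (f b0)) \<le> 4" "card (cls V f (f b0) \<inter> prt V q) \<le> 1" using B0 by auto
    have "\<not> prt V q \<subseteq> cls V f (f b0)"
    proof
      assume "prt V q \<subseteq> cls V f (f b0)"
      then have "cls V f (f b0) \<inter> prt V q = prt V q" by blast
      then show False using s0(2) cq3 by simp
    qed
    then obtain b1 where b1: "b1 \<in> prt V q" "b1 \<notin> cls V f (f b0)" by blast
    have b1V: "b1 \<in> V" using b1 unfolding prt_def by auto
    have b0V: "b0 \<in> V" using b0 unfolding prt_def by auto
    have ne: "f b0 \<noteq> f b1" using b1 b1V unfolding cls_def by auto
    note B1 = case3_b[OF fin cf pq cp5 cq5 nogood P b1(1)]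
    then have s1: "card (cls V f (f b1)) \<le> 4" using nd by auto
    have m0: "cls V f (f b0) \<inter> (prt V p \<union> prt V q) \<noteq> {}" using b0 b0V unfolding cls_def by auto
    have m1: "cls V f (f b1) \<inter> (prt V p \<union> prt V q) \<noteq> {}" using b1 b1V unfolding cls_def by auto
    have sz: "card (cls V f (f b0)) + card (cls V f (f b1)) \<le> 8" using s0 s1 by linarith
    show ?thesis by (rule gen_move[OF fin cf ne pq m0 m1 sz])
  qed
qed


lemma big_internal:
  assumes fin: "finite V" and cf: "col V f" and pq: "p \<noteq> q"
    and CU: "cls V f c \<subseteq> prt V p \<union> prt V q" and c4: "4 \<le> card (cls V f c \<inter> prt V p)"
  shows "cls V f c \<subseteq> prt V p" "4 \<le> card (cls V f c)"
proof -
  let ?C = "cls V f c"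
  have ok: "okS ?C" by (rule col_ok[OF cf])
  have fC: "finite ?C" by (rule cls_fin[OF fin])
  show "?C \<subseteq> prt V p"
  proof
    fix x assume x: "x \<in> ?C"
    show "x \<in> prt V p"
    proof (rule ccontr)
      assume "x \<notin> prt V p"
      then have xq: "fst x = q" using x CU unfolding prt_def by auto
      have "card (?C \<inter> prt V p) \<le> 3"
        by (rule see_bound[OF ok x]) (use xq pq fC in \<open>auto simp: prt_def\<close>)
      then show False using c4 by linarith
    qed
  qed
  show "4 \<le> card ?C" using c4 card_mono[OF fC, of "?C \<inter> prt V p"] by auto
qed

lemma step:
  assumes fin: "finite V" and cf: "col V f" and pq: "p \<noteq> q"
    and cp3: "3 \<le> card (prt V p)" and cq3: "3 \<le> card (prt V q)"
    and cp5: "card (prt V p) \<le> 5" and cq5: "card (prt V q) \<le> 5"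
  shows "DONE V p q f \<or> RED V p q f"
proof (cases "\<exists>c. goodc V p q f c")
  case True
  then have "DONE V p q f" unfolding DONE_def using cf by blast
  then show ?thesis by blast
next
  case False
  then have nogood: "\<forall>c. \<not> goodc V p q f c" by blast
  have nogood': "\<forall>c. \<not> goodc V q p f c" using nogood goodc_sym by metis
  show ?thesis
  proof (cases "\<exists>c. cls V f c \<inter> (prt V p \<union> prt V q) \<noteq> {} \<and> cls V f c \<subseteq> prt V p \<union> prt V q")
    case True
    then obtain c where c: "cls V f c \<inter> (prt V p \<union> prt V q) \<noteq> {}" "cls V f c \<subseteq> prt V p \<union> prt V q"
      by blast
    have "\<not> goodc V p q f c" using nogood by blast
    then have "4 \<le> card (cls V f c \<inter> prt V p) \<or> 4 \<le> card (cls V f c \<inter> prt V q)"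
      using c unfolding goodc_def by auto
    then show ?thesis
    proof
      assume h: "4 \<le> card (cls V f c \<inter> prt V p)"
      note bi = big_internal[OF fin cf pq c(2) h]
      show ?thesis by (rule case3[OF fin cf pq cp5 cq5 cq3 nogood bi])
    next
      assume h: "4 \<le> card (cls V f c \<inter> prt V q)"
      have c2: "cls V f c \<subseteq> prt V q \<union> prt V p" using c(2) by blast
      note bi = big_internal[OF fin cf pq[symmetric] c2 h]
      have "DONE V q p f \<or> RED V q p f" by (rule case3[OF fin cf pq[symmetric] cq5 cp5 cp3 nogood' bi])
      then show ?thesis using DONE_sym RED_sym by metis
    qed
  next
    case False
    then have H4: "\<forall>c. cls V f c \<inter> (prt V p \<union> prt V q) \<noteq> {} \<longrightarrow> \<not> cls V f c \<subseteq> prt V p \<union> prt V q"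
      by blast
    show ?thesis by (rule case4[OF fin cf pq cp3 cq3 H4])
  qed
qed

lemma key:
  assumes fin: "finite V" and pq: "p \<noteq> q"
    and cp3: "3 \<le> card (prt V p)" and cq3: "3 \<le> card (prt V q)"
    and cp5: "card (prt V p) \<le> 5" and cq5: "card (prt V q) \<le> 5"
  shows "col V f \<Longrightarrow> DONE V p q f"
proof (induction "card (f ` (prt V p \<union> prt V q))" arbitrary: f rule: less_induct)
  case less
  note st = step[OF fin less.prems pq cp3 cq3 cp5 cq5]
  show ?case
  proof (cases "DONE V p q f")
    case True then show ?thesis .
  next
    case False
    then have "RED V p q f" using st by blast
    then obtain g where g: "col V g" "g ` V \<subseteq> f ` V"
      "card (g ` (prt V p \<union> prt V q)) < card (f ` (prt V p \<union> prt V q))"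
      unfolding RED_def by blast
    have "DONE V p q g" using less.hyps[OF g(3) g(1)] .
    then obtain h c where h: "col V h" "h ` V \<subseteq> g ` V" "goodc V p q h c" unfolding DONE_def by blast
    then show ?thesis unfolding DONE_def using g(2) by blast
  qed
qed


lemma rc_col: "relaxed_coloring 3 V cmp_edge f = col V f"
proof -
  have e: "\<And>u. u \<in> V \<Longrightarrow> {v\<in>V. cmp_edge u v \<and> f v = f u} = {v\<in>cls V f (f u). fst v \<noteq> fst u}"
    unfolding cmp_edge_def cls_def by auto
  show ?thesis
  proof
    assume h: "relaxed_coloring 3 V cmp_edge f"
    show "col V f" unfolding col_def okS_def
    proof (intro allI ballI)
      fix c u assume u: "u \<in> cls V f c"
      then have uV: "u \<in> V" and fu: "f u = c" unfolding cls_def by auto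
      have "card {v\<in>V. cmp_edge u v \<and> f v = f u} \<le> 3" using h uV unfolding relaxed_coloring_def by auto
      then show "card {v \<in> cls V f c. fst v \<noteq> fst u} \<le> 3" using e[OF uV] fu by simp
    qed
  next
    assume h: "col V f"
    show "relaxed_coloring 3 V cmp_edge f" unfolding relaxed_coloring_def
    proof
      fix u assume uV: "u \<in> V"
      have "u \<in> cls V f (f u)" using uV unfolding cls_def by auto
      then have "card {v\<in>cls V f (f u). fst v \<noteq> fst u} \<le> 3" using h unfolding col_def okS_def by blast
      then show "card {v\<in>V. cmp_edge u v \<and> f v = f u} \<le> 3" using e[OF uV] by simp
    qed
  qed
qed

lemma exists_col: "finite V \<Longrightarrow> \<exists>f. col V f"
proof -
  assume fin: "finite V"
  obtain f :: "nat \<times> nat \<Rightarrow> nat" and m where f: "f ` V = {i. i < m}" "inj_on f V"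
    using finite_imp_inj_to_nat_seg[OF fin] by blast
  have "col V f" unfolding col_def
  proof
    fix c
    have fc: "finite (cls V f c)" by (rule cls_fin[OF fin])
    have "\<forall>a1\<in>cls V f c. \<forall>a2\<in>cls V f c. a1 = a2" using f(2) unfolding cls_def inj_on_def by auto
    then have "card (cls V f c) \<le> 1" using card_le_Suc0_iff_eq[OF fc] by simp
    then show "okS (cls V f c)" using fc by (intro okS_card4) auto
  qed
  then show ?thesis by blast
qed

lemma extend_card:
  assumes "finite S" "T \<subseteq> S" "card T \<le> k" "k \<le> card S"
  shows "\<exists>X. T \<subseteq> X \<and> X \<subseteq> S \<and> card X = k"
proof -
  have fT: "finite T" using assms finite_subset by auto
  have "card (S - T) = card S - card T" using assms fT by (simp add: card_Diff_subset)
  then have "k - card T \<le> card (S - T)" using assms by linarith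
  then obtain Y where Y: "Y \<subseteq> S - T" "card Y = k - card T" "finite Y" by (rule obtain_subset_with_card_n)
  have "card (T \<union> Y) = card T + card Y" using Y fT by (intro card_Un_disjoint) auto
  then have "card (T \<union> Y) = k" using Y assms by linarith
  then show ?thesis using Y assms by (intro exI[of _ "T \<union> Y"]) auto
qed


theorem lemma5p3:
  fixes s :: nat and n :: "nat \<Rightarrow> nat"
  assumes pos: "\<And>j. j < s \<Longrightarrow> n j \<ge> 1"
    and sorted: "\<And>i j. i \<le> j \<Longrightarrow> j < s \<Longrightarrow> n j \<le> n i"
    and le5: "\<And>j. j < s \<Longrightarrow> n j \<le> 5"
    and two_big: "card {j. j < s \<and> n j \<ge> 3} \<ge> 2"
  shows "\<exists>f. optimal_relaxed_coloring 3 (cmp_vertices s n) cmp_edge f \<and>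
           (\<exists>c A B. A \<subseteq> cmp_part n 0 \<and> card A = 3 \<and> B \<subseteq> cmp_part n 1 \<and> card B = 3 \<and>
                    (\<forall>v\<in>A \<union> B. f v = c))"
proof -
  define V where "V = cmp_vertices s n"
  have "V = Sigma {..<s} (\<lambda>j. {..<n j})" unfolding V_def cmp_vertices_def by auto
  then have finV: "finite V" by auto
  have "\<exists>j. j < s \<and> 3 \<le> n j \<and> j \<noteq> 0"
  proof (rule ccontr)
    assume "\<not> ?thesis"
    then have "{j. j < s \<and> n j \<ge> 3} \<subseteq> {0}" by auto
    then have "card {j. j < s \<and> n j \<ge> 3} \<le> card {0::nat}" by (intro card_mono) auto
    then show False using two_big by simp
  qed
  then obtain j1 where j1: "j1 < s" "3 \<le> n j1" "j1 \<noteq> 0" by blast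
  have s1: "1 < s" using j1 by linarith
  have n1: "3 \<le> n 1" using sorted[of 1 j1] j1 by linarith
  have n0: "3 \<le> n 0" using sorted[of 0 1] s1 n1 by linarith
  have n05: "n 0 \<le> 5" and n15: "n 1 \<le> 5" using le5 s1 by auto
  have prtc: "prt V j = cmp_part n j" if "j < s" for j
    using that unfolding prt_def V_def cmp_vertices_def cmp_part_def by auto
  have cpart: "card (cmp_part n j) = n j" for j
  proof -
    have "cmp_part n j = Pair j ` {..<n j}" unfolding cmp_part_def by auto
    then show ?thesis by (simp add: card_image inj_on_def)
  qed
  have c0: "card (prt V 0) = n 0" and c1: "card (prt V 1) = n 1"
    using prtc[of 0] prtc[of 1] s1 cpart by auto
  have KEY: "\<And>f. col V f \<Longrightarrow> DONE V 0 1 f"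
    by (rule key[OF finV]) (use c0 c1 n0 n1 n05 n15 in auto)
  define P where "P = (\<lambda>m. \<exists>f :: nat \<times> nat \<Rightarrow> nat. relaxed_coloring 3 V cmp_edge f \<and> card (f ` V) = m)"
  obtain f0 where f0: "col V f0" using exists_col[OF finV] by blast
  have "P (card (f0 ` V))" unfolding P_def using f0 rc_col by blast
  then have "P (Least P)" by (rule LeastI)
  moreover have chi: "relaxed_chi 3 V cmp_edge = Least P" unfolding relaxed_chi_def P_def by simp
  ultimately obtain f :: "nat \<times> nat \<Rightarrow> nat" where f: "relaxed_coloring 3 V cmp_edge f" "card (f ` V) = relaxed_chi 3 V cmp_edge"
    unfolding P_def by auto
  have cf: "col V f" using f(1) rc_col by blast
  obtain h c where h: "col V h" "h ` V \<subseteq> f ` V" "goodc V 0 1 h c"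
    using KEY[OF cf] unfolding DONE_def by blast
  define G where "G = cls V h c"
  have G: "G \<subseteq> prt V 0 \<union> prt V 1" "G \<noteq> {}" "card (G \<inter> prt V 0) \<le> 3" "card (G \<inter> prt V 1) \<le> 3"
    using h(3) unfolding goodc_def G_def by auto
  have fp0: "finite (prt V 0)" and fp1: "finite (prt V 1)" using finV unfolding prt_def by auto
  obtain XA where XA: "G \<inter> prt V 0 \<subseteq> XA" "XA \<subseteq> prt V 0" "card XA = 3"
    using extend_card[OF fp0, of "G \<inter> prt V 0" 3] G(3) c0 n0 by auto
  obtain XB where XB: "G \<inter> prt V 1 \<subseteq> XB" "XB \<subseteq> prt V 1" "card XB = 3"
    using extend_card[OF fp1, of "G \<inter> prt V 1" 3] G(4) c1 n1 by auto
  define g where "g = (\<lambda>v. if v \<in> XA \<union> XB then c else h v)"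
  have XV: "XA \<union> XB \<subseteq> V" using XA XB unfolding prt_def by auto
  have GX: "G \<subseteq> XA \<union> XB" using G(1) XA XB by blast
  have clsc: "cls V g c = XA \<union> XB"
  proof
    show "cls V g c \<subseteq> XA \<union> XB"
    proof
      fix v assume v: "v \<in> cls V g c"
      show "v \<in> XA \<union> XB"
      proof (cases "v \<in> XA \<union> XB")
        case False
        then have "v \<in> G" using v unfolding g_def cls_def G_def by auto
        then show ?thesis using GX by blast
      qed
    qed
    show "XA \<union> XB \<subseteq> cls V g c" using XV unfolding cls_def g_def by auto
  qed
  have clso: "cls V g c' \<subseteq> cls V h c'" if "c' \<noteq> c" for c'
    using that unfolding cls_def g_def by auto
  have okX: "okS (XA \<union> XB)"
    by (rule okS_two[of XA XB _ 0 1]) (use XA XB fp0 fp1 finite_subset in \<open>auto simp: prt_def\<close>)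
  have cg: "col V g" unfolding col_def
  proof
    fix c'
    show "okS (cls V g c')"
    proof (cases "c' = c")
      case True then show ?thesis using clsc okX by simp
    next
      case False
      have "okS (cls V h c')" using h(1) col_ok by blast
      then show ?thesis using clso[OF False] cls_fin[OF finV] okS_subset by blast
    qed
  qed
  have "c \<in> h ` V" using G(2) unfolding G_def cls_def by auto
  then have gh: "g ` V \<subseteq> h ` V" unfolding g_def by auto
  have "card (g ` V) \<le> card (f ` V)" using gh h(2) finV by (intro card_mono) auto
  moreover have "Least P \<le> card (g ` V)"
    by (rule Least_le) (use cg rc_col in \<open>auto simp: P_def\<close>)
  ultimately have "card (g ` V) = relaxed_chi 3 V cmp_edge" using f(2) chi by linarith
  then have opt: "optimal_relaxed_coloring 3 V cmp_edge g"
    unfolding optimal_relaxed_coloring_def using cg rc_col by blast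
  have "XA \<subseteq> cmp_part n 0" "XB \<subseteq> cmp_part n 1" using XA XB prtc[of 0] prtc[of 1] s1 by auto
  moreover have "\<forall>v\<in>XA \<union> XB. g v = c" unfolding g_def by auto
  ultimately show ?thesis using opt XA(3) XB(3) unfolding V_def by blast
qed

end
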